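(* Let $\hat B$ be the bus susceptance matrix of a connected power network with bus set $\mathcal N$. Let $P^g, P^d \in \mathbb R^{\mathcal N}$ and let $\theta$ satisfy $\hat B\theta = P^g - P^d$. Let $s \neq t$ be two generator buses, let $\Gamma > 0$, and define $\delta$ by $\delta_s = \Gamma$, $\delta_t = -\Gamma$, $\delta_k = 0$ for $k \neq s,t$; let $\hat\theta$ satisfy $\hat B\hat\theta = P^g + \delta - P^d$. Let $k \neq t$ be a bus such that every path in the network between $s$ and $k$ includes $t$. Then $$\hat\theta_k - \hat\theta_t \;=\; \theta_k - \theta_t .$$
   Context: DC power flow model. The network is an undirected connected graph on the bus set $\mathcal N$; each line $km$ has reactance $x_{km} > 0$. The bus susceptance matrix $\hat B$ is defined by $\hat B_{kk} = \sum_{km \ni k} 1/x_{km}$ (sum over lines incident to $k$), $\hat B_{km} = -1/x_{km}$ if $km$ is a line, and $\hat B_{km} = 0$ otherwise. *)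

theory Defs
  imports Complex_Main
begin

definition network :: "'a set \<Rightarrow> ('a \<Rightarrow> 'a \<Rightarrow> bool) \<Rightarrow> ('a \<Rightarrow> 'a \<Rightarrow> real) \<Rightarrow> bool" where
  "network N E x \<longleftrightarrow> finite N \<and>
     (\<forall>k m. E k m \<longrightarrow> k \<in> N \<and> m \<in> N) \<and>
     (\<forall>k m. E k m \<longrightarrow> E m k) \<and>
     (\<forall>k. \<not> E k k) \<and>
     (\<forall>k m. E k m \<longrightarrow> x k m = x m k \<and> x k m > 0)"

definition is_walk :: "('a \<Rightarrow> 'a \<Rightarrow> bool) \<Rightarrow> 'a list \<Rightarrow> bool" where
  "is_walk E ps \<longleftrightarrow> ps \<noteq> [] \<and> (\<forall>i. Suc i < length ps \<longrightarrow> E (ps ! i) (ps ! Suc i))"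

definition is_path_between :: "('a \<Rightarrow> 'a \<Rightarrow> bool) \<Rightarrow> 'a \<Rightarrow> 'a \<Rightarrow> 'a list \<Rightarrow> bool" where
  "is_path_between E u v ps \<longleftrightarrow> is_walk E ps \<and> distinct ps \<and> hd ps = u \<and> last ps = v"

definition connected_network :: "'a set \<Rightarrow> ('a \<Rightarrow> 'a \<Rightarrow> bool) \<Rightarrow> bool" where
  "connected_network N E \<longleftrightarrow> (\<forall>u\<in>N. \<forall>v\<in>N. \<exists>ps. is_path_between E u v ps)"

definition Bhat :: "'a set \<Rightarrow> ('a \<Rightarrow> 'a \<Rightarrow> bool) \<Rightarrow> ('a \<Rightarrow> 'a \<Rightarrow> real) \<Rightarrow> 'a \<Rightarrow> 'a \<Rightarrow> real" where
  "Bhat N E x k m =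
     (if k = m then (\<Sum>j\<in>{j\<in>N. E k j}. 1 / x k j)
      else if E k m then - (1 / x k m) else 0)"

definition mat_vec :: "'a set \<Rightarrow> ('a \<Rightarrow> 'a \<Rightarrow> real) \<Rightarrow> ('a \<Rightarrow> real) \<Rightarrow> 'a \<Rightarrow> real" where
  "mat_vec N A v k = (\<Sum>m\<in>N. A k m * v m)"

end

theory Submission
  imports Defs
begin

lemma bhat_expand:
  assumes net: "network N E x" and iN: "i \<in> N"
  shows "mat_vec N (Bhat N E x) f i = (\<Sum>j\<in>{j\<in>N. E i j}. (f i - f j) / x i j)"
proof -
  have irr: "\<not> E i i" using net unfolding network_def by auto
  have fin: "finite N" using net network_def by auto
  have "mat_vec N (Bhat N E x) f i = (\<Sum>m\<in>N. (if m = i then (\<Sum>j\<in>{j\<in>N. E i j}. 1 / x i j) * f i else 0) + (if E i m then - (f m / x i m) else 0))"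
    unfolding mat_vec_def Bhat_def by (rule sum.cong) (auto simp: irr)
  also have "\<dots> = (\<Sum>j\<in>{j\<in>N. E i j}. 1 / x i j) * f i + (\<Sum>m\<in>N. if E i m then - (f m / x i m) else 0)"
    by (simp add: sum.distrib fin iN)
  also have "(\<Sum>m\<in>N. if E i m then - (f m / x i m) else 0) = (\<Sum>j\<in>{j\<in>N. E i j}. - (f j / x i j))"
    by (simp add: sum.inter_filter fin)
  also have "(\<Sum>j\<in>{j\<in>N. E i j}. 1 / x i j) * f i + (\<Sum>j\<in>{j\<in>N. E i j}. - (f j / x i j))
      = (\<Sum>j\<in>{j\<in>N. E i j}. (f i - f j) / x i j)"
    by (simp add: sum_distrib_right sum.distrib[symmetric] diff_divide_distrib)
  finally show ?thesis .
qed

lemma maxp: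
  fixes f :: "'a \<Rightarrow> real" and C :: "'a set"
  assumes net: "network N E x" and conn: "connected_network N E"
  and CN: "C \<subseteq> N" and tN: "t \<in> N" and tC: "t \<notin> C"
  and clos: "\<And>v w. v \<in> C \<Longrightarrow> E v w \<Longrightarrow> w \<in> C \<or> w = t"
  and harm: "\<And>i. i \<in> C \<Longrightarrow> (\<Sum>j\<in>{j\<in>N. E i j}. (f i - f j) / x i j) = 0"
  and kC: "k \<in> C"
  shows "f k \<le> f t"
proof (rule ccontr)
  assume nk: "\<not> f k \<le> f t"
  have fin: "finite C" using net CN finite_subset unfolding network_def by blast
  define M where "M = Max (f ` C)"
  have Mge: "\<And>v. v \<in> C \<Longrightarrow> f v \<le> M" using fin M_def by simp
  have Mt: "M > f t" using Mge[OF kC] nk by linarith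
  obtain i where iC: "i \<in> C" and fi: "f i = M" proof -
    have "M \<in> f ` C" unfolding M_def using fin kC by (intro Max_in) auto
    then show ?thesis using that by auto
  qed
  define S where "S = {v\<in>C. f v = M}"
  have step: "w \<in> S" if vS: "v \<in> S" and Evw: "E v w" for v w
  proof -
    have vC: "v \<in> C" and fv: "f v = M" using vS S_def by auto
    have fin2: "finite {j\<in>N. E v j}" using net unfolding network_def by auto
    have nn: "\<forall>j\<in>{j\<in>N. E v j}. 0 \<le> (f v - f j) / x v j"
    proof
      fix j assume "j \<in> {j\<in>N. E v j}"
      hence Evj: "E v j" by simp
      hence "x v j > 0" using net unfolding network_def by auto
      moreover have "f j \<le> M" using clos[OF vC Evj] Mge Mt by auto
      ultimately show "0 \<le> (f v - f j) / x v j" using fv by simp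
    qed
    have wN: "w \<in> N" using net Evw unfolding network_def by auto
    have "(f v - f w) / x v w = 0" proof -
      have "\<forall>j\<in>{j\<in>N. E v j}. (f v - f j) / x v j = 0"
        using sum_nonneg_eq_0_iff[OF fin2, of "\<lambda>j. (f v - f j) / x v j"] nn harm[OF vC] by blast
      then show ?thesis using wN Evw by blast
    qed
    moreover have "x v w > 0" using net Evw unfolding network_def by auto
    ultimately have fw: "f w = M" using fv by simp
    then have "w \<noteq> t" using Mt by auto
    then have "w \<in> C" using clos[OF vC Evw] by auto
    then show "w \<in> S" using fw S_def by auto
  qed
  obtain ps where ps: "is_path_between E i t ps" using conn iC CN tN unfolding connected_network_def by blast
  have ne: "ps \<noteq> []" using ps unfolding is_path_between_def is_walk_def by auto
  have all: "n < length ps \<Longrightarrow> ps ! n \<in> S" for n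
  proof (induction n)
    case 0
    have "ps ! 0 = i" using ps ne hd_conv_nth unfolding is_path_between_def by metis
    then show ?case using iC fi S_def by auto
  next
    case (Suc n)
    then have "ps ! n \<in> S" by simp
    moreover have "E (ps!n) (ps ! Suc n)" using ps Suc.prems unfolding is_path_between_def is_walk_def by auto
    ultimately show ?case using step by blast
  qed
  have "last ps = ps ! (length ps - 1)" using ne by (simp add: last_conv_nth)
  then have "t \<in> S" using all[of "length ps - 1"] ps ne unfolding is_path_between_def by auto
  then show False using tC S_def by auto
qed

lemma closC:
  assumes net: "network N E x"
  and vC: "v \<in> N" "v \<noteq> t" "\<forall>ps. is_path_between E s v ps \<longrightarrow> t \<in> set ps"
  and Evw: "E v w" and wt: "w \<noteq> t"
  shows "\<forall>ps. is_path_between E s w ps \<longrightarrow> t \<in> set ps"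
proof (intro allI impI, rule ccontr)
  fix ps assume ps: "is_path_between E s w ps" and tn: "t \<notin> set ps"
  have ne: "ps \<noteq> []" using ps unfolding is_path_between_def is_walk_def by auto
  show False
  proof (cases "v \<in> set ps")
    case True
    then obtain n where n: "n < length ps" "ps ! n = v" by (metis in_set_conv_nth)
    define qs where "qs = take (Suc n) ps"
    have "is_path_between E s v qs"
      unfolding is_path_between_def is_walk_def
    proof (intro conjI allI impI)
      show "qs \<noteq> []" using ne qs_def by simp
      fix i assume "Suc i < length qs"
      then show "E (qs ! i) (qs ! Suc i)" using ps qs_def unfolding is_path_between_def is_walk_def by auto
    next
      show "distinct qs" using ps qs_def unfolding is_path_between_def by auto
      show "hd qs = s" using ps ne qs_def unfolding is_path_between_def by simp
      show "last qs = v" using n qs_def by (simp add: take_Suc_conv_app_nth)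
    qed
    moreover have "t \<notin> set qs" using tn qs_def by (meson in_set_takeD)
    ultimately show False using vC by blast
  next
    case False
    define qs where "qs = ps @ [v]"
    have Ewv: "E w v" using net Evw unfolding network_def by auto
    have "is_path_between E s v qs"
      unfolding is_path_between_def is_walk_def
    proof (intro conjI allI impI)
      show "qs \<noteq> []" using qs_def by simp
      fix i assume i: "Suc i < length qs"
      show "E (qs ! i) (qs ! Suc i)"
      proof (cases "Suc i < length ps")
        case True
        then show ?thesis using ps qs_def unfolding is_path_between_def is_walk_def by (auto simp: nth_append)
      next
        case F: False
        then have "Suc i = length ps" using i qs_def by simp
        moreover have "last ps = w" using ps unfolding is_path_between_def by simp
        ultimately have "ps ! i = w" using ne by (simp add: last_conv_nth) (metis diff_Suc_1 One_nat_def)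
        then show ?thesis using Ewv \<open>Suc i = length ps\<close> qs_def by (simp add: nth_append)
      qed
    next
      show "distinct qs" using ps qs_def False unfolding is_path_between_def by auto
      show "hd qs = s" using ps ne qs_def unfolding is_path_between_def by simp
      show "last qs = v" using qs_def by simp
    qed
    moreover have "t \<notin> set qs" using tn qs_def vC by auto
    ultimately show False using vC by blast
  qed
qed

theorem lemma3:
  fixes N :: "'a set" and E :: "'a \<Rightarrow> 'a \<Rightarrow> bool" and x :: "'a \<Rightarrow> 'a \<Rightarrow> real"
    and Pg Pd \<theta> \<theta>h :: "'a \<Rightarrow> real" and s t k :: 'a and \<Gamma> :: real
  assumes net: "network N E x"
    and conn: "connected_network N E"
    and theta: "\<forall>i\<in>N. mat_vec N (Bhat N E x) \<theta> i = Pg i - Pd i"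
    and st: "s \<in> N" "t \<in> N" "s \<noteq> t"
    and Gamma: "\<Gamma> > 0"
    and thetah: "\<forall>i\<in>N. mat_vec N (Bhat N E x) \<theta>h i =
                   Pg i + (if i = s then \<Gamma> else if i = t then - \<Gamma> else 0) - Pd i"
    and k: "k \<in> N" "k \<noteq> t"
    and cut: "\<forall>ps. is_path_between E s k ps \<longrightarrow> t \<in> set ps"
  shows "\<theta>h k - \<theta>h t = \<theta> k - \<theta> t"
proof -
  define C where "C = {v\<in>N. v \<noteq> t \<and> (\<forall>ps. is_path_between E s v ps \<longrightarrow> t \<in> set ps)}"
  define \<phi> where "\<phi> = (\<lambda>v. \<theta>h v - \<theta> v)"
  have sC: "s \<notin> C"
  proof
    assume "s \<in> C"
    moreover have "is_path_between E s s [s]" unfolding is_path_between_def is_walk_def by simp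
    ultimately show False using st unfolding C_def by auto
  qed
  have clos: "w \<in> C \<or> w = t" if "v \<in> C" "E v w" for v w
  proof (cases "w = t")
    case False
    have "w \<in> N" using net that unfolding network_def by auto
    then show ?thesis using closC[OF net _ _ _ that(2) False, of s] that(1) False unfolding C_def by auto
  qed simp
  have harm: "(\<Sum>j\<in>{j\<in>N. E i j}. (\<phi> i - \<phi> j) / x i j) = 0" if iC: "i \<in> C" for i
  proof -
    have iN: "i \<in> N" and it: "i \<noteq> t" using iC C_def by auto
    have isn: "i \<noteq> s" using iC sC by auto
    have fin: "finite N" using net network_def by auto
    have "mat_vec N (Bhat N E x) \<phi> i = mat_vec N (Bhat N E x) \<theta>h i - mat_vec N (Bhat N E x) \<theta> i"
      unfolding mat_vec_def \<phi>_def by (simp add: right_diff_distrib sum_subtractf)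
    also have "\<dots> = 0" using theta thetah iN it isn by simp
    finally show ?thesis using bhat_expand[OF net iN] by simp
  qed
  have harm2: "(\<Sum>j\<in>{j\<in>N. E i j}. ((- \<phi>) i - (- \<phi>) j) / x i j) = 0" if iC: "i \<in> C" for i
  proof -
    have "(\<Sum>j\<in>{j\<in>N. E i j}. ((- \<phi>) i - (- \<phi>) j) / x i j) = - (\<Sum>j\<in>{j\<in>N. E i j}. (\<phi> i - \<phi> j) / x i j)"
      by (simp add: sum_negf[symmetric] minus_divide_left)
    then show ?thesis using harm[OF iC] by simp
  qed
  have CN: "C \<subseteq> N" and tC: "t \<notin> C" and kC: "k \<in> C" using C_def k cut by auto
  have "\<phi> k \<le> \<phi> t" by (rule maxp[OF net conn CN st(2) tC clos harm kC])
  moreover have "(- \<phi>) k \<le> (- \<phi>) t" by (rule maxp[OF net conn CN st(2) tC clos harm2 kC])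
  ultimately show ?thesis unfolding \<phi>_def by simp
qed

end
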